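(* $\mathbf{K}^{\nabla\bullet}$ is sound and strongly complete with respect to the class of serial frames: for every set $\Gamma\cup\{\phi\}\subseteq\mathcal{L}(\nabla,\bullet)$, $\Gamma\vdash_{\mathbf{K}^{\nabla\bullet}}\phi$ iff for every Kripke model $\mathcal{M}$ with serial accessibility relation and every state $s$, if $\mathcal{M},s\vDash\Gamma$ then $\mathcal{M},s\vDash\phi$.
   Context: $\mathcal{L}(\nabla,\bullet)$: $\phi::=p\mid\neg\phi\mid\phi\land\phi\mid\nabla\phi\mid\bullet\phi$ over a nonempty set $\mathbf{P}$ of propositional variables; $\Delta\phi:=\neg\nabla\phi$, $\circ\phi:=\neg\bullet\phi$. Kripke models $\langle S,R,V\rangle$: $s\vDash\nabla\phi$ iff there are $t,u$ with $sRt$, $sRu$, $t\vDash\phi$, $u\nvDash\phi$; $s\vDash\bullet\phi$ iff $s\vDash\phi$ and there is $t$ with $sRt$, $t\nvDash\phi$. $R$ is serial if every state has an $R$-successor. The Hilbert system $\mathbf{K}^{\nabla\bullet}$ has axioms: A0 all propositional tautologies; A1 $\bullet\phi\to\phi$; A2 $\nabla\phi\leftrightarrow\nabla\neg\phi$; A3 $\bullet(\psi\to\phi)\land\phi\to\bullet\phi$; A4 $\nabla(\phi\land\psi)\to\nabla\phi\vee\nabla\psi$; A5 $\bullet(\phi\land\psi)\to\bullet\phi\vee\bullet\psi$; A6 $\nabla\phi\to\bullet\phi\vee\bullet\neg\phi$; A7 $\bullet(\phi\to\psi)\land\bullet(\neg\phi\to\chi)\to\nabla\phi$; rules R1 $\phi/\Delta\phi$;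 R2 $\phi/\circ\phi$; R3 $\phi\leftrightarrow\psi/\Delta\phi\leftrightarrow\Delta\psi$; R4 $\phi\leftrightarrow\psi/\circ\phi\leftrightarrow\circ\psi$; MP. $\Gamma\vdash\phi$ means $\vdash(\gamma_1\land\dots\land\gamma_n)\to\phi$ for some finite subset of $\Gamma$. *)

theory Defs
  imports Main
begin

datatype 'p fm =
    Var 'p
  | Neg "'p fm"
  | Conj "'p fm" "'p fm"
  | Nabla "'p fm"
  | Bul "'p fm"

definition Imp :: "'p fm \<Rightarrow> 'p fm \<Rightarrow> 'p fm" where
  "Imp a b = Neg (Conj a (Neg b))"

definition Disj :: "'p fm \<Rightarrow> 'p fm \<Rightarrow> 'p fm" where
  "Disj a b = Neg (Conj (Neg a) (Neg b))"

definition Iff :: "'p fm \<Rightarrow> 'p fm \<Rightarrow> 'p fm" where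
  "Iff a b = Conj (Imp a b) (Imp b a)"

definition Delta :: "'p fm \<Rightarrow> 'p fm" where
  "Delta a = Neg (Nabla a)"

definition Circ :: "'p fm \<Rightarrow> 'p fm" where
  "Circ a = Neg (Bul a)"

section \<open>Propositional tautologies (modal subformulas treated as atoms)\<close>

fun peval :: "('p fm \<Rightarrow> bool) \<Rightarrow> 'p fm \<Rightarrow> bool" where
  "peval g (Var p) = g (Var p)"
| "peval g (Neg a) = (\<not> peval g a)"
| "peval g (Conj a b) = (peval g a \<and> peval g b)"
| "peval g (Nabla a) = g (Nabla a)"
| "peval g (Bul a) = g (Bul a)"

definition tautology :: "'p fm \<Rightarrow> bool" where
  "tautology a = (\<forall>g. peval g a)"

inductive kthm :: "'p fm \<Rightarrow> bool" where
  A0: "tautology a \<Longrightarrow> kthm a"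
| A1: "kthm (Imp (Bul a) a)"
| A2: "kthm (Iff (Nabla a) (Nabla (Neg a)))"
| A3: "kthm (Imp (Conj (Bul (Imp b a)) a) (Bul a))"
| A4: "kthm (Imp (Nabla (Conj a b)) (Disj (Nabla a) (Nabla b)))"
| A5: "kthm (Imp (Bul (Conj a b)) (Disj (Bul a) (Bul b)))"
| A6: "kthm (Imp (Nabla a) (Disj (Bul a) (Bul (Neg a))))"
| A7: "kthm (Imp (Conj (Bul (Imp a b)) (Bul (Imp (Neg a) c))) (Nabla a))"
| R1: "kthm a \<Longrightarrow> kthm (Delta a)"
| R2: "kthm a \<Longrightarrow> kthm (Circ a)"
| R3: "kthm (Iff a b) \<Longrightarrow> kthm (Iff (Delta a) (Delta b))"
| R4: "kthm (Iff a b) \<Longrightarrow> kthm (Iff (Circ a) (Circ b))"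
| MP: "kthm (Imp a b) \<Longrightarrow> kthm a \<Longrightarrow> kthm b"

fun conjs :: "'p fm list \<Rightarrow> 'p fm" where
  "conjs [] = undefined"
| "conjs [a] = a"
| "conjs (a # b # xs) = Conj a (conjs (b # xs))"

definition derives :: "'p fm set \<Rightarrow> 'p fm \<Rightarrow> bool" where
  "derives \<Gamma> a =
     (kthm a \<or> (\<exists>xs. xs \<noteq> [] \<and> set xs \<subseteq> \<Gamma> \<and> kthm (Imp (conjs xs) a)))"

definition is_model :: "'s set \<Rightarrow> ('s \<Rightarrow> 's \<Rightarrow> bool) \<Rightarrow> bool" where
  "is_model W R = (W \<noteq> {} \<and> (\<forall>s t. R s t \<longrightarrow> s \<in> W \<and> t \<in> W))"

definition serial :: "'s set \<Rightarrow> ('s \<Rightarrow> 's \<Rightarrow> bool) \<Rightarrow> bool" where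
  "serial W R = (\<forall>s\<in>W. \<exists>t\<in>W. R s t)"

fun sat :: "'s set \<Rightarrow> ('s \<Rightarrow> 's \<Rightarrow> bool) \<Rightarrow> ('p \<Rightarrow> 's set) \<Rightarrow> 's \<Rightarrow> 'p fm \<Rightarrow> bool" where
  "sat W R V s (Var p) = (s \<in> V p)"
| "sat W R V s (Neg a) = (\<not> sat W R V s a)"
| "sat W R V s (Conj a b) = (sat W R V s a \<and> sat W R V s b)"
| "sat W R V s (Nabla a) =
     (\<exists>t u. R s t \<and> R s u \<and> sat W R V t a \<and> \<not> sat W R V u a)"
| "sat W R V s (Bul a) = (sat W R V s a \<and> (\<exists>t. R s t \<and> \<not> sat W R V t a))"

text \<open>Semantic consequence over serial models whose states are drawn from the type 's.\<close>
definition serial_conseq :: "'s itself \<Rightarrow> 'p fm set \<Rightarrow> 'p fm \<Rightarrow> bool" where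
  "serial_conseq _ \<Gamma> a =
     (\<forall>(W::'s set) R (V::'p \<Rightarrow> 's set) s.
        is_model W R \<and> serial W R \<and> s \<in> W \<and> (\<forall>g\<in>\<Gamma>. sat W R V s g)
        \<longrightarrow> sat W R V s a)"

end

theory Submission
  imports Defs
begin

lemma peval_sat: "peval (sat W R V s) a = sat W R V s a"
  by (induction a) auto

lemma sound: "kthm a \<Longrightarrow> sat W R V s a"
proof (induction a arbitrary: s rule: kthm.induct)
  case (A0 a)
  then show ?case using peval_sat[of W R V s a] by (simp add: tautology_def)
next
  case (R1 a) then show ?case by (auto simp: Delta_def)
next
  case (R2 a) then show ?case by (auto simp: Circ_def)
next
  case (R3 a b) then show ?case by (auto simp: Delta_def Iff_def Imp_def)
next
  case (R4 a b) then show ?case by (auto simp: Circ_def Iff_def Imp_def)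
next
  case (MP a b) then show ?case by (auto simp: Imp_def)
qed (auto simp: Imp_def Iff_def Disj_def)

definition Fls :: "'p fm" where "Fls = Conj (Var undefined) (Neg (Var undefined))"

lemma peval_Fls[simp]: "\<not> peval g Fls" by (simp add: Fls_def)

fun imps :: "'p fm list \<Rightarrow> 'p fm \<Rightarrow> 'p fm" where
  "imps [] c = c" | "imps (x#xs) c = Imp x (imps xs c)"

lemma peval_Imp[simp]: "peval g (Imp a b) = (peval g a \<longrightarrow> peval g b)" by (simp add: Imp_def)
lemma peval_Disj[simp]: "peval g (Disj a b) = (peval g a \<or> peval g b)" by (simp add: Disj_def)
lemma peval_Iff[simp]: "peval g (Iff a b) = (peval g a \<longleftrightarrow> peval g b)" by (auto simp add: Iff_def)
lemma peval_Delta[simp]: "peval g (Delta a) = (\<not> g (Nabla a))" by (simp add: Delta_def)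
lemma peval_Circ[simp]: "peval g (Circ a) = (\<not> g (Bul a))" by (simp add: Circ_def)

lemma peval_imps[simp]: "peval g (imps xs c) = ((\<forall>x\<in>set xs. peval g x) \<longrightarrow> peval g c)"
  by (induction xs) auto

lemma kthm_imps: "kthm (imps xs c) \<Longrightarrow> \<forall>x\<in>set xs. kthm x \<Longrightarrow> kthm c"
  by (induction xs) (auto intro: kthm.MP)

lemma kthm_taut:
  assumes "\<forall>p\<in>set ps. kthm p" "\<And>g. \<forall>p\<in>set ps. peval g p \<Longrightarrow> peval g c"
  shows "kthm c"
proof -
  have "tautology (imps ps c)" using assms(2) by (simp add: tautology_def)
  then show ?thesis by (meson kthm.A0 kthm_imps assms(1))
qed

definition cons :: "'p fm set \<Rightarrow> bool" where
  "cons S = (\<forall>xs. set xs \<subseteq> S \<longrightarrow> \<not> kthm (imps xs Fls))"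

definition mcs :: "'p fm set \<Rightarrow> bool" where
  "mcs M = (cons M \<and> (\<forall>a. a \<in> M \<or> Neg a \<in> M))"

lemma mcs_rule:
  assumes "mcs M" "set xs \<subseteq> M" "\<forall>p\<in>set ps. kthm p"
    "\<And>g. \<forall>p\<in>set ps. peval g p \<Longrightarrow> \<forall>x\<in>set xs. peval g x \<Longrightarrow> peval g c"
  shows "c \<in> M"
proof (rule ccontr)
  assume "c \<notin> M" then have "Neg c \<in> M" using assms(1) mcs_def by blast
  have "kthm (imps (Neg c # xs) Fls)"
  proof (rule kthm_taut[of ps])
    show "\<forall>p\<in>set ps. kthm p" by (fact assms(3))
    fix g assume "\<forall>p\<in>set ps. peval g p"
    then show "peval g (imps (Neg c # xs) Fls)" using assms(4)[of g] by auto
  qed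
  moreover have "set (Neg c # xs) \<subseteq> M" using \<open>Neg c \<in> M\<close> assms(2) by auto
  ultimately show False using assms(1) unfolding mcs_def cons_def by blast
qed

lemma mcs_Fls: "mcs M \<Longrightarrow> Fls \<notin> M"
proof
  assume "mcs M" "Fls \<in> M"
  have "kthm (imps [Fls] Fls)" by (rule kthm_taut[of "[]"]) auto
  then show False using \<open>mcs M\<close> \<open>Fls \<in> M\<close> by (auto simp: mcs_def cons_def dest: spec[of _ "[Fls]"])
qed

lemma mcs_neg: assumes m: "mcs M" shows "(Neg a \<in> M) = (a \<notin> M)"
proof
  assume n: "Neg a \<in> M"
  show "a \<notin> M"
  proof
    assume "a \<in> M"
    have "Fls \<in> M" by (rule mcs_rule[of M "[a, Neg a]" "[]"]) (use m n \<open>a \<in> M\<close> in auto)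
    then show False using mcs_Fls m by blast
  qed
next
  assume "a \<notin> M" then show "Neg a \<in> M" using m by (auto simp: mcs_def)
qed

lemma mcs_conj: assumes m: "mcs M" shows "(Conj a b \<in> M) = (a \<in> M \<and> b \<in> M)"
proof
  assume c: "Conj a b \<in> M"
  have "a \<in> M" by (rule mcs_rule[of M "[Conj a b]" "[]"]) (use m c in auto)
  moreover have "b \<in> M" by (rule mcs_rule[of M "[Conj a b]" "[]"]) (use m c in auto)
  ultimately show "a \<in> M \<and> b \<in> M" ..
next
  assume "a \<in> M \<and> b \<in> M"
  then show "Conj a b \<in> M" by (intro mcs_rule[of M "[a, b]" "[]"]) (use m in auto)
qed

lemma mcs_disj: "mcs M \<Longrightarrow> (Disj a b \<in> M) = (a \<in> M \<or> b \<in> M)"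
  by (simp add: Disj_def mcs_neg mcs_conj)

lemma mcs_thm: "mcs M \<Longrightarrow> kthm a \<Longrightarrow> a \<in> M"
  by (rule mcs_rule[of M "[]" "[a]"]) auto

lemma mcs_mp: "mcs M \<Longrightarrow> kthm (Imp a b) \<Longrightarrow> a \<in> M \<Longrightarrow> b \<in> M"
  by (rule mcs_rule[of M "[a]" "[Imp a b]"]) auto

lemma bul_cong: assumes m: "mcs M" and k0: "kthm (Iff a b)" shows "(Bul a \<in> M) = (Bul b \<in> M)"
proof -
  have k: "kthm (Iff (Circ a) (Circ b))" using k0 by (rule kthm.R4)
  show ?thesis
  proof
    assume "Bul a \<in> M" then show "Bul b \<in> M"
      by (intro mcs_rule[of M "[Bul a]" "[Iff (Circ a) (Circ b)]"]) (use m k in auto)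
  next
    assume "Bul b \<in> M" then show "Bul a \<in> M"
      by (intro mcs_rule[of M "[Bul b]" "[Iff (Circ a) (Circ b)]"]) (use m k in auto)
  qed
qed

lemma nab_cong: assumes m: "mcs M" and k0: "kthm (Iff a b)" shows "(Nabla a \<in> M) = (Nabla b \<in> M)"
proof -
  have k: "kthm (Iff (Delta a) (Delta b))" using k0 by (rule kthm.R3)
  show ?thesis
  proof
    assume "Nabla a \<in> M" then show "Nabla b \<in> M"
      by (intro mcs_rule[of M "[Nabla a]" "[Iff (Delta a) (Delta b)]"]) (use m k in auto)
  next
    assume "Nabla b \<in> M" then show "Nabla a \<in> M"
      by (intro mcs_rule[of M "[Nabla b]" "[Iff (Delta a) (Delta b)]"]) (use m k in auto)
  qed
qed

lemma A1m: "mcs M \<Longrightarrow> Bul a \<in> M \<Longrightarrow> a \<in> M"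
  using mcs_mp kthm.A1 by blast

lemma A2m: assumes m: "mcs M" shows "(Nabla (Neg a) \<in> M) = (Nabla a \<in> M)"
proof -
  have k: "kthm (Iff (Nabla a) (Nabla (Neg a)))" by (rule kthm.A2)
  show ?thesis
  proof
    assume "Nabla (Neg a) \<in> M" then show "Nabla a \<in> M"
      by (intro mcs_rule[of M "[Nabla (Neg a)]" "[Iff (Nabla a) (Nabla (Neg a))]"]) (use m k in auto)
  next
    assume "Nabla a \<in> M" then show "Nabla (Neg a) \<in> M"
      by (intro mcs_rule[of M "[Nabla a]" "[Iff (Nabla a) (Nabla (Neg a))]"]) (use m k in auto)
  qed
qed

lemma A3m: "mcs M \<Longrightarrow> Bul (Imp b a) \<in> M \<Longrightarrow> a \<in> M \<Longrightarrow> Bul a \<in> M"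
  by (rule mcs_rule[of M "[Bul (Imp b a), a]" "[Imp (Conj (Bul (Imp b a)) a) (Bul a)]"])
    (use kthm.A3[of b a] in auto)

lemma A4m: "mcs M \<Longrightarrow> Nabla (Conj a b) \<in> M \<Longrightarrow> Nabla a \<in> M \<or> Nabla b \<in> M"
  using mcs_mp[OF _ kthm.A4[of a b]] mcs_disj by blast

lemma A5m: "mcs M \<Longrightarrow> Bul (Conj a b) \<in> M \<Longrightarrow> Bul a \<in> M \<or> Bul b \<in> M"
  using mcs_mp[OF _ kthm.A5[of a b]] mcs_disj by blast

lemma A6m: "mcs M \<Longrightarrow> Nabla a \<in> M \<Longrightarrow> a \<in> M \<Longrightarrow> Bul a \<in> M"
  using mcs_mp[OF _ kthm.A6[of a]] mcs_disj A1m mcs_neg by blast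

lemma A7m: "mcs M \<Longrightarrow> Bul (Imp a b) \<in> M \<Longrightarrow> Bul (Imp (Neg a) c) \<in> M \<Longrightarrow> Nabla a \<in> M"
  by (rule mcs_rule[of M "[Bul (Imp a b), Bul (Imp (Neg a) c)]"
      "[Imp (Conj (Bul (Imp a b)) (Bul (Imp (Neg a) c))) (Nabla a)]"]) (use kthm.A7[of a b c] in auto)

lemma L1: assumes "mcs M" "kthm (Imp x y)" "x \<in> M" "Bul y \<in> M" shows "Bul x \<in> M"
proof -
  have "kthm (Iff y (Imp (Neg y) x))" by (rule kthm_taut[of "[Imp x y]"]) (use assms(2) in auto)
  then have "Bul (Imp (Neg y) x) \<in> M" using bul_cong[OF assms(1)] assms(4) by blast
  then show ?thesis using A3m[OF assms(1)] assms(3) by blast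
qed

lemma L7: assumes "mcs M" "kthm (Imp p q)" "Bul (Neg p) \<in> M" "Bul q \<in> M" shows "Nabla p \<in> M"
proof -
  have "kthm (Iff (Neg p) (Imp p Fls))" by (rule kthm_taut[of "[]"]) auto
  then have 1: "Bul (Imp p Fls) \<in> M" using bul_cong assms by blast
  have "kthm (Iff q (Imp (Neg p) q))" by (rule kthm_taut[of "[Imp p q]"]) (use assms(2) in auto)
  then have 2: "Bul (Imp (Neg p) q) \<in> M" using bul_cong assms by blast
  show ?thesis using A7m[OF assms(1) 1 2] .
qed

definition B :: "'p fm set \<Rightarrow> 'p fm set" where
  "B M = {a. (a \<in> M \<and> Bul a \<notin> M) \<or> (a \<notin> M \<and> Bul (Neg a) \<in> M \<and> Nabla a \<notin> M)}"

lemma Bul_B: "mcs M \<Longrightarrow> (Bul a \<in> M) = (a \<in> M \<and> a \<notin> B M)"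
  using A1m by (auto simp: B_def)

lemma Nabla_B: assumes m: "mcs M" shows "(Nabla a \<in> M) = (a \<notin> B M \<and> Neg a \<notin> B M)"
proof -
  have nn: "(Bul (Neg (Neg a)) \<in> M) = (Bul a \<in> M)"
    by (rule bul_cong[OF m]) (rule kthm_taut[of "[]"], auto)
  have na: "(Nabla (Neg a) \<in> M) = (Nabla a \<in> M)" using A2m m by blast
  show ?thesis
  proof (cases "a \<in> M")
    case True
    then show ?thesis using nn na m A6m[of M a] by (auto simp: B_def mcs_neg)
  next
    case False
    then show ?thesis using nn na m A6m[of M "Neg a"] by (auto simp: B_def mcs_neg)
  qed
qed

lemma B_thm: "mcs M \<Longrightarrow> kthm a \<Longrightarrow> a \<in> B M"
proof -
  assume m: "mcs M" "kthm a"
  have "Circ a \<in> M" using m kthm.R2 mcs_thm by blast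
  then show ?thesis using m mcs_thm mcs_neg by (auto simp: B_def Circ_def)
qed

lemma B_up: assumes m: "mcs M" and k: "kthm (Imp a b)" and a: "a \<in> B M" shows "b \<in> B M"
proof (cases "a \<in> M")
  case True
  then have "Bul a \<notin> M" using a by (auto simp: B_def)
  moreover have "b \<in> M" using True k m mcs_mp by blast
  ultimately show ?thesis using L1[OF m k True] by (auto simp: B_def)
next
  case False
  then have h: "Bul (Neg a) \<in> M" "Nabla a \<notin> M" using a by (auto simp: B_def)
  show ?thesis
  proof (cases "b \<in> M")
    case True
    then show ?thesis using L7[OF m k h(1)] h by (auto simp: B_def)
  next
    case bF: False
    have k2: "kthm (Imp (Neg b) (Neg a))" by (rule kthm_taut[of "[Imp a b]"]) (use k in auto)
    have 1: "Bul (Neg b) \<in> M" using L1[OF m k2] bF h m mcs_neg by blast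
    have "Nabla b \<notin> M"
    proof
      assume "Nabla b \<in> M"
      then have "Nabla (Neg b) \<in> M" using A2m m by blast
      moreover have "kthm (Iff (Neg b) (Conj (Neg a) (Disj a (Neg b))))"
        by (rule kthm_taut[of "[Imp a b]"]) (use k in auto)
      ultimately have "Nabla (Conj (Neg a) (Disj a (Neg b))) \<in> M" using nab_cong m by blast
      then have "Nabla (Neg a) \<in> M \<or> Nabla (Disj a (Neg b)) \<in> M" using A4m m by blast
      moreover have "Nabla (Neg a) \<notin> M" using A2m m h by blast
      ultimately have n: "Nabla (Disj a (Neg b)) \<in> M" by blast
      have "Disj a (Neg b) \<in> M" using bF m mcs_disj mcs_neg by blast
      then have "Bul (Disj a (Neg b)) \<in> M" using A6m m n by blast
      moreover have kd: "kthm (Imp a (Disj a (Neg b)))" by (rule kthm_taut[of "[]"]) auto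
      ultimately have "Nabla a \<in> M" using L7[OF m kd h(1)] by blast
      then show False using h by blast
    qed
    then show ?thesis using 1 bF by (auto simp: B_def)
  qed
qed

lemma B_conj1: assumes m: "mcs M" and a: "a \<in> B M" and b: "b \<in> B M" and aM: "a \<in> M"
  shows "Conj a b \<in> B M"
proof -
  have ba: "Bul a \<notin> M" using a aM by (auto simp: B_def)
  show ?thesis
  proof (cases "b \<in> M")
    case True
    then have "Bul b \<notin> M" using b by (auto simp: B_def)
    then have "Bul (Conj a b) \<notin> M" using A5m m ba by blast
    moreover have "Conj a b \<in> M" using mcs_conj[OF m] True aM by blast
    ultimately show ?thesis by (simp add: B_def)
  next
    case False
    then have h: "Bul (Neg b) \<in> M" "Nabla b \<notin> M" using b by (auto simp: B_def)
    have "Nabla a \<notin> M" using A6m m aM ba by blast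
    then have 1: "Nabla (Conj a b) \<notin> M" using A4m m h by blast
    have "kthm (Iff (Neg b) (Conj (Neg (Conj a b)) (Disj a (Neg b))))"
      by (rule kthm_taut[of "[]"]) auto
    then have "Bul (Conj (Neg (Conj a b)) (Disj a (Neg b))) \<in> M" using bul_cong m h by blast
    then have "Bul (Neg (Conj a b)) \<in> M \<or> Bul (Disj a (Neg b)) \<in> M" using A5m m by blast
    moreover have "Bul (Disj a (Neg b)) \<notin> M"
    proof
      assume "Bul (Disj a (Neg b)) \<in> M"
      moreover have kd: "kthm (Imp a (Disj a (Neg b)))" by (rule kthm_taut[of "[]"]) auto
      ultimately show False using L1[OF m kd aM] ba by blast
    qed
    ultimately have "Bul (Neg (Conj a b)) \<in> M" by blast
    moreover have "Conj a b \<notin> M" using mcs_conj[OF m] False by blast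
    ultimately show ?thesis using 1 by (simp add: B_def)
  qed
qed

lemma B_conj: assumes m: "mcs M" and a: "a \<in> B M" and b: "b \<in> B M"
  shows "Conj a b \<in> B M"
proof (cases "a \<in> M \<or> b \<in> M")
  case True
  then show ?thesis
  proof
    assume "a \<in> M" then show ?thesis using B_conj1 m a b by blast
  next
    assume "b \<in> M" then have "Conj b a \<in> B M" using B_conj1 m a b by blast
    moreover have "kthm (Imp (Conj b a) (Conj a b))" by (rule kthm_taut[of "[]"]) auto
    ultimately show ?thesis using B_up m by blast
  qed
next
  case False
  then have ha: "Bul (Neg a) \<in> M" "Nabla a \<notin> M" and hb: "Bul (Neg b) \<in> M" "Nabla b \<notin> M"
    using a b by (auto simp: B_def)
  have 1: "Nabla (Conj a b) \<notin> M" using A4m m ha hb by blast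
  have "kthm (Iff (Neg a) (Conj (Neg (Conj a b)) (Disj (Neg a) b)))"
    by (rule kthm_taut[of "[]"]) auto
  then have "Bul (Conj (Neg (Conj a b)) (Disj (Neg a) b)) \<in> M" using bul_cong m ha by blast
  then have "Bul (Neg (Conj a b)) \<in> M \<or> Bul (Disj (Neg a) b) \<in> M" using A5m m by blast
  moreover have "Bul (Disj (Neg a) b) \<notin> M"
  proof -
    have "kthm (Imp b (Disj (Neg a) b))" by (rule kthm_taut[of "[]"]) auto
    then have "Disj (Neg a) b \<in> B M" using B_up m b by blast
    then show ?thesis using Bul_B m by blast
  qed
  ultimately have "Bul (Neg (Conj a b)) \<in> M" by blast
  moreover have "Conj a b \<notin> M" using mcs_conj[OF m] False by blast
  ultimately show ?thesis using 1 by (simp add: B_def)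
qed

fun cj :: "'p fm list \<Rightarrow> 'p fm" where
  "cj [] = Neg Fls" | "cj (x#xs) = Conj x (cj xs)"

lemma peval_cj[simp]: "peval g (cj xs) = (\<forall>x\<in>set xs. peval g x)"
  by (induction xs) auto

lemma B_cj: "mcs M \<Longrightarrow> set xs \<subseteq> B M \<Longrightarrow> cj xs \<in> B M"
proof (induction xs)
  case Nil
  have "kthm (Neg (Fls :: 'a fm))" by (rule kthm_taut[of "[]"]) auto
  then show ?case using B_thm Nil by auto
next
  case (Cons x xs) then show ?case using B_conj by auto
qed

lemma peval_conjs: "xs \<noteq> [] \<Longrightarrow> peval g (conjs xs) = (\<forall>x\<in>set xs. peval g x)"
  by (induction xs rule: conjs.induct) auto

lemma drop_taut: assumes "kthm (imps xs Fls)" shows "kthm (imps (filter (\<lambda>x. x \<noteq> Neg a) xs) a)"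
proof (rule kthm_taut[of "[imps xs Fls]"])
  show "\<forall>p\<in>set [imps xs Fls]. kthm p" using assms by simp
next
  fix g assume h: "\<forall>p\<in>set [imps xs Fls]. peval g p"
  have hx: "\<not> (\<forall>x\<in>set xs. peval g x)" using h by simp
  show "peval g (imps (filter (\<lambda>x. x \<noteq> Neg a) xs) a)"
  proof (simp only: peval_imps, intro impI, rule ccontr)
    assume z: "\<forall>x\<in>set (filter (\<lambda>x. x \<noteq> Neg a) xs). peval g x" and na: "\<not> peval g a"
    have "\<forall>x\<in>set xs. peval g x"
    proof
      fix x assume "x \<in> set xs"
      then show "peval g x" using z na by (cases "x = Neg a") auto
    qed
    then show False using hx by blast
  qed
qed

lemma imps_cj: assumes "kthm (imps ys c)" shows "kthm (Imp (cj ys) c)"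
proof (rule kthm_taut[of "[imps ys c]"])
  show "\<forall>p\<in>set [imps ys c]. kthm p" using assms by simp
next
  fix g assume "\<forall>p\<in>set [imps ys c]. peval g p"
  then show "peval g (Imp (cj ys) c)" by (simp only: peval_imps peval_cj peval_Imp list.set ball_simps) simp
qed

lemma imps_conjs: assumes "kthm (imps ys c)" "ys \<noteq> []" shows "kthm (Imp (conjs ys) c)"
proof (rule kthm_taut[of "[imps ys c]"])
  show "\<forall>p\<in>set [imps ys c]. kthm p" using assms by simp
next
  fix g assume "\<forall>p\<in>set [imps ys c]. peval g p"
  then show "peval g (Imp (conjs ys) c)" using peval_conjs[OF assms(2), of g] by simp
qed

lemma lindenbaum: assumes "cons G" shows "\<exists>M. G \<subseteq> M \<and> mcs M"
proof -
  let ?A = "{S. G \<subseteq> S \<and> cons S}"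
  have "\<exists>M\<in>?A. \<forall>X\<in>?A. M \<subseteq> X \<longrightarrow> X = M"
  proof (rule subset_Zorn_nonempty)
    show "?A \<noteq> {}" using assms by blast
  next
    fix C assume C: "C \<noteq> {}" "subset.chain ?A C"
    have "cons (\<Union>C)" unfolding cons_def
    proof (intro allI impI)
      fix xs assume xs: "set xs \<subseteq> \<Union>C"
      obtain S where "S \<in> C" "set xs \<subseteq> S"
        using finite_subset_Union_chain[OF _ xs C(1) C(2)] by blast
      then show "\<not> kthm (imps xs Fls)" using C(2) by (auto simp: cons_def subset_chain_def)
    qed
    moreover have "G \<subseteq> \<Union>C"
    proof -
      from C(1) obtain X where X: "X \<in> C" by blast
      then have "G \<subseteq> X" using C(2) by (auto simp: subset_chain_def)
      then show ?thesis using X by blast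
    qed
    ultimately show "\<Union>C \<in> ?A" by blast
  qed
  then obtain M where M0: "M \<in> ?A" and mx0: "\<forall>X\<in>?A. M \<subseteq> X \<longrightarrow> X = M"
    by blast
  have M: "G \<subseteq> M" "cons M" using M0 by auto
  have mx: "X = M" if "G \<subseteq> X" "cons X" "M \<subseteq> X" for X using mx0 that by blast
  have "a \<in> M \<or> Neg a \<in> M" for a
  proof (rule ccontr)
    assume n: "\<not> (a \<in> M \<or> Neg a \<in> M)"
    have "\<not> cons (insert a M)"
    proof
      assume "cons (insert a M)"
      then have "insert a M = M" using mx[of "insert a M"] M by blast
      then show False using n by blast
    qed
    then obtain xs where xs: "set xs \<subseteq> insert a M" "kthm (imps xs Fls)" by (auto simp: cons_def)
    have "\<not> cons (insert (Neg a) M)"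
    proof
      assume "cons (insert (Neg a) M)"
      then have "insert (Neg a) M = M" using mx[of "insert (Neg a) M"] M by blast
      then show False using n by blast
    qed
    then obtain ys where ys: "set ys \<subseteq> insert (Neg a) M" "kthm (imps ys Fls)" by (auto simp: cons_def)
    let ?zs = "filter (\<lambda>x. x \<noteq> a) xs @ filter (\<lambda>x. x \<noteq> Neg a) ys"
    have "kthm (imps ?zs Fls)"
    proof (rule kthm_taut[of "[imps xs Fls, imps ys Fls]"])
      show "\<forall>p\<in>set [imps xs Fls, imps ys Fls]. kthm p" using xs ys by auto
    next
      fix g assume h: "\<forall>p\<in>set [imps xs Fls, imps ys Fls]. peval g p"
      have hx: "\<not> (\<forall>x\<in>set xs. peval g x)" using h by simp
      have hy: "\<not> (\<forall>x\<in>set ys. peval g x)" using h by simp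
      show "peval g (imps ?zs Fls)"
      proof (simp only: peval_imps, intro impI)
        assume z: "\<forall>x\<in>set ?zs. peval g x"
        show "peval g Fls"
        proof (cases "peval g a")
          case True
          have "\<forall>x\<in>set xs. peval g x"
          proof
            fix x assume "x \<in> set xs"
            then show "peval g x" using z True by (cases "x = a") auto
          qed
          then show ?thesis using hx by blast
        next
          case False
          have "\<forall>x\<in>set ys. peval g x"
          proof
            fix x assume "x \<in> set ys"
            then show "peval g x" using z False by (cases "x = Neg a") auto
          qed
          then show ?thesis using hy by blast
        qed
      qed
    qed
    moreover have "set ?zs \<subseteq> M" using xs ys by auto
    ultimately show False using M by (auto simp: cons_def)
  qed
  then show ?thesis using M by (auto simp: mcs_def)
qed

lemma existence: assumes m: "mcs M" and a: "a \<notin> B M" shows "\<exists>t. mcs t \<and> B M \<subseteq> t \<and> a \<notin> t"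
proof -
  have "cons (insert (Neg a) (B M))" unfolding cons_def
  proof (intro allI impI notI)
    fix xs assume xs: "set xs \<subseteq> insert (Neg a) (B M)" "kthm (imps xs Fls)"
    let ?ys = "filter (\<lambda>x. x \<noteq> Neg a) xs"
    have "kthm (Imp (cj ?ys) a)" using imps_cj drop_taut xs(2) by blast
    moreover have "cj ?ys \<in> B M" by (rule B_cj[OF m]) (use xs(1) in auto)
    ultimately show False using B_up m a by blast
  qed
  then obtain t where "insert (Neg a) (B M) \<subseteq> t" "mcs t" using lindenbaum by blast
  then show ?thesis using mcs_neg by blast
qed

definition cW :: "'p fm set set set" where "cW = {{t} | t. mcs t}"
definition cR :: "'p fm set set \<Rightarrow> 'p fm set set \<Rightarrow> bool" where
  "cR x y = (\<exists>s t. x = {s} \<and> y = {t} \<and> mcs s \<and> mcs t \<and> B s \<subseteq> t)"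
definition cV :: "'p \<Rightarrow> 'p fm set set set" where "cV p = {{t} | t. mcs t \<and> Var p \<in> t}"

lemma cR_single: "mcs s \<Longrightarrow> cR {s} y = (\<exists>t. y = {t} \<and> mcs t \<and> B s \<subseteq> t)"
  unfolding cR_def by auto

lemma truth: "mcs s \<Longrightarrow> sat cW cR cV {s} a = (a \<in> s)"
proof (induction a arbitrary: s)
  case (Var p) then show ?case by (auto simp: cV_def)
next
  case (Neg a) then show ?case by (simp add: mcs_neg)
next
  case (Conj a b) then show ?case by (simp add: mcs_conj)
next
  case (Nabla a)
  have m: "mcs s" by fact
  show ?case
  proof
    assume "sat cW cR cV {s} (Nabla a)"
    then obtain y z where y: "cR {s} y" "sat cW cR cV y a" and z: "cR {s} z" "\<not> sat cW cR cV z a"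
      unfolding sat.simps by blast
    obtain t where t: "y = {t}" "mcs t" "B s \<subseteq> t" using y(1) unfolding cR_single[OF m] by (elim exE conjE) (rule that, assumption+)
    obtain u where u: "z = {u}" "mcs u" "B s \<subseteq> u" using z(1) unfolding cR_single[OF m] by (elim exE conjE) (rule that, assumption+)
    have "a \<in> t" using y(2) Nabla.IH[OF t(2)] t(1) by simp
    moreover have "a \<notin> u" using z(2) Nabla.IH[OF u(2)] u(1) by simp
    ultimately have "a \<notin> B s \<and> Neg a \<notin> B s" using t u mcs_neg by blast
    then show "Nabla a \<in> s" using Nabla_B[OF m] by blast
  next
    assume "Nabla a \<in> s"
    then have h: "a \<notin> B s" "Neg a \<notin> B s" using Nabla_B[OF m] by auto
    obtain t where t: "mcs t" "B s \<subseteq> t" "Neg a \<notin> t" using existence[OF m h(2)] by blast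
    obtain u where u: "mcs u" "B s \<subseteq> u" "a \<notin> u" using existence[OF m h(1)] by blast
    have "cR {s} {t}" "cR {s} {u}" using t u m by (auto simp: cR_def)
    moreover have "sat cW cR cV {t} a" using Nabla.IH[OF t(1)] t(3) mcs_neg[OF t(1)] by simp
    moreover have "\<not> sat cW cR cV {u} a" using Nabla.IH[OF u(1)] u(3) by simp
    ultimately show "sat cW cR cV {s} (Nabla a)" unfolding sat.simps by blast
  qed
next
  case (Bul a)
  have m: "mcs s" by fact
  show ?case
  proof
    assume "sat cW cR cV {s} (Bul a)"
    then obtain z where s1: "sat cW cR cV {s} a" and z: "cR {s} z" "\<not> sat cW cR cV z a"
      unfolding sat.simps by blast
    obtain u where u: "z = {u}" "mcs u" "B s \<subseteq> u" using z(1) unfolding cR_single[OF m] by (elim exE conjE) (rule that, assumption+)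
    have "a \<notin> u" using z(2) Bul.IH[OF u(2)] u(1) by simp
    then have "a \<notin> B s" using u by blast
    moreover have "a \<in> s" using s1 Bul.IH[OF m] by simp
    ultimately show "Bul a \<in> s" using Bul_B[OF m] by blast
  next
    assume "Bul a \<in> s"
    then have h: "a \<in> s" "a \<notin> B s" using Bul_B[OF m] by auto
    obtain u where u: "mcs u" "B s \<subseteq> u" "a \<notin> u" using existence[OF m h(2)] by blast
    have "cR {s} {u}" using u m by (auto simp: cR_def)
    moreover have "\<not> sat cW cR cV {u} a" using Bul.IH[OF u(1)] u(3) by simp
    moreover have "sat cW cR cV {s} a" using Bul.IH[OF m] h(1) by simp
    ultimately show "sat cW cR cV {s} (Bul a)" unfolding sat.simps by blast
  qed
qed

lemma sat_conjs: "xs \<noteq> [] \<Longrightarrow> sat W R V s (conjs xs) = (\<forall>x\<in>set xs. sat W R V s x)"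
  by (induction xs rule: conjs.induct) auto

lemma soundness: "derives \<Gamma> \<phi> \<Longrightarrow> serial_conseq TYPE('s) \<Gamma> \<phi>"
  unfolding derives_def serial_conseq_def
proof (elim disjE exE conjE; intro allI impI)
  fix W :: "'s set" and R V s
  assume "kthm \<phi>" then show "sat W R V s \<phi>" by (rule sound)
next
  fix xs and W :: "'s set" and R V s
  assume h: "xs \<noteq> []" "set xs \<subseteq> \<Gamma>" "kthm (Imp (conjs xs) \<phi>)"
    "is_model W R \<and> serial W R \<and> s \<in> W \<and> (\<forall>g\<in>\<Gamma>. sat W R V s g)"
  have "sat W R V s (Imp (conjs xs) \<phi>)" by (rule sound[OF h(3)])
  moreover have "sat W R V s (conjs xs)" by (subst sat_conjs[OF h(1)]) (use h(2,4) in blast)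
  ultimately show "sat W R V s \<phi>" by (simp add: Imp_def)
qed

lemma cons_neg: assumes nd: "\<not> derives \<Gamma> \<phi>" shows "cons (insert (Neg \<phi>) \<Gamma>)"
  unfolding cons_def
proof (intro allI impI notI)
  fix xs assume xs: "set xs \<subseteq> insert (Neg \<phi>) \<Gamma>" "kthm (imps xs Fls)"
  let ?ys = "filter (\<lambda>x. x \<noteq> Neg \<phi>) xs"
  have k: "kthm (imps ?ys \<phi>)" using drop_taut[OF xs(2)] .
  show False
  proof (cases "?ys = []")
    case True
    then have "kthm \<phi>" using k by simp
    then have "derives \<Gamma> \<phi>" unfolding derives_def by (rule disjI1)
    then show False using nd by simp
  next
    case False
    have "kthm (Imp (conjs ?ys) \<phi>)" using imps_conjs[OF k False] .
    moreover have "set ?ys \<subseteq> \<Gamma>" using xs(1) by auto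
    ultimately have "derives \<Gamma> \<phi>" unfolding derives_def using False by (intro disjI2 exI[of _ ?ys]) simp
    then show False using nd by simp
  qed
qed

lemma cW_model: "is_model (cW :: 'a fm set set set) cR"
  unfolding is_model_def
proof (rule conjI)
  have nf: "\<not> kthm (Fls :: 'a fm)"
  proof
    assume "kthm (Fls :: 'a fm)"
    note sound[OF this, of "{}::nat set" "\<lambda>_ _. False" "\<lambda>_. {}" 0]
    then show False by (simp add: Fls_def)
  qed
  have "cons ({} :: 'a fm set)" unfolding cons_def
  proof (intro allI impI)
    fix xs :: "'a fm list" assume "set xs \<subseteq> {}"
    then have "xs = []" by simp
    then show "\<not> kthm (imps xs Fls)" using nf by simp
  qed
  then obtain M :: "'a fm set" where "mcs M" using lindenbaum by blast
  then have "{M} \<in> (cW :: 'a fm set set set)" unfolding cW_def by auto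
  then show "(cW :: 'a fm set set set) \<noteq> {}" by auto
next
  show "\<forall>x y. cR x y \<longrightarrow> x \<in> (cW :: 'a fm set set set) \<and> y \<in> cW"
    unfolding cR_def cW_def by auto
qed

lemma cW_serial: "serial (cW :: 'a fm set set set) cR"
  unfolding serial_def
proof
  fix x :: "'a fm set set" assume "x \<in> cW"
  then obtain t where t: "x = {t}" "mcs t" unfolding cW_def by auto
  have kf: "kthm (Neg (Fls :: 'a fm))" by (rule kthm_taut[of "[]"]) auto
  have "Circ (Neg Fls) \<in> t" using mcs_thm[OF t(2) kthm.R2[OF kf]] .
  then have "Bul (Neg Fls) \<notin> t" using mcs_neg[OF t(2)] by (simp add: Circ_def)
  then have "Fls \<notin> B t" using mcs_Fls[OF t(2)] by (simp add: B_def)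
  then obtain u where u: "mcs u" "B t \<subseteq> u" using existence[OF t(2)] by blast
  have "{u} \<in> cW" using u(1) unfolding cW_def by auto
  moreover have "cR x {u}" unfolding cR_def t(1) using t(2) u by auto
  ultimately show "\<exists>y\<in>cW. cR x y" by blast
qed

lemma completeness:
  assumes "serial_conseq TYPE('p fm set set) \<Gamma> (\<phi> :: 'p fm)" shows "derives \<Gamma> \<phi>"
proof (rule ccontr)
  assume nd: "\<not> derives \<Gamma> \<phi>"
  obtain M where M: "insert (Neg \<phi>) \<Gamma> \<subseteq> M" "mcs M" using lindenbaum[OF cons_neg[OF nd]] by blast
  have MW: "{M} \<in> cW" using M(2) unfolding cW_def by auto
  have G: "\<forall>g\<in>\<Gamma>. sat cW cR cV {M} g"
  proof
    fix g assume "g \<in> \<Gamma>"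
    then have "g \<in> M" using M(1) by blast
    then show "sat cW cR cV {M} g" using truth[OF M(2), of g] by simp
  qed
  have "sat cW cR cV {M} \<phi>"
    by (rule assms[unfolded serial_conseq_def, rule_format, where W=cW and R=cR and V=cV and s="{M}"])
      (use cW_model cW_serial MW G in simp)
  moreover have "Neg \<phi> \<in> M" using M(1) by blast
  ultimately show False using truth[OF M(2), of \<phi>] mcs_neg[OF M(2)] by simp
qed

theorem theorem2:
  fixes \<Gamma> :: "'p fm set" and \<phi> :: "'p fm"
  shows "(derives \<Gamma> \<phi> \<longleftrightarrow> serial_conseq TYPE('p fm set set) \<Gamma> \<phi>)
         \<and> (derives \<Gamma> \<phi> \<longrightarrow> serial_conseq TYPE('s) \<Gamma> \<phi>)"
  by (intro conjI iffI impI) (erule soundness, erule completeness, erule soundness)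

end
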